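(* Let $\mathbb{K}$ be a field of characteristic zero, let $p,q\in\mathbb{Z}^n_{\ge0}$ be nonzero vectors and let $\beta,\gamma\in\mathbb{K}^n$ be non-proportional vectors such that the derivations $\Delta^p_\beta$ and $\Delta^q_\gamma$ of $\mathbb{K}[x_1,\ldots,x_n]$ generate a finite dimensional Lie algebra. Let $r$ and $s$ be the smallest non-negative integers such that $\langle\beta,rp+q\rangle=0$ and $\langle\gamma,p+sq\rangle=0$. Then $r=0$ or $s=0$.
   Context: For $p\in\mathbb{Z}^n_{\ge0}$ and $\beta\in\mathbb{K}^n$, $\Delta^p_\beta:=x_1^{p_1}\cdots x_n^{p_n}\sum_{j=1}^n\beta_jx_j\partial_j$, where $\partial_j=\partial/\partial x_j$. $\langle\beta,u\rangle:=\sum_i\beta_iu_i$. The Lie bracket is the commutator of derivations. *)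

theory Defs
  imports "HOL-Library.Poly_Mapping"
begin

text \<open>Polynomials in the variables x_j, j ranging over the finite type 'n (so n = CARD('n)),
  with coefficients in 'a: finitely supported maps from exponent vectors to coefficients.\<close>
type_synonym ('n, 'a) mpoly = "('n \<Rightarrow>\<^sub>0 nat) \<Rightarrow>\<^sub>0 'a"

definition pair :: "('n::finite \<Rightarrow> 'a::field) \<Rightarrow> ('n \<Rightarrow> nat) \<Rightarrow> 'a" where
  "pair \<beta> u = (\<Sum>j\<in>UNIV. \<beta> j * of_nat (u j))"

text \<open>Delta^p_beta = x^p * sum_j beta_j x_j d/dx_j. On a monomial x^v the Euler-type operator
  sum_j beta_j x_j d_j acts by multiplication with the pairing of beta and v.\<close>
definition Delta :: "('n::finite \<Rightarrow> nat) \<Rightarrow> ('n \<Rightarrow> 'a::field) \<Rightarrow> ('n,'a) mpoly \<Rightarrow> ('n,'a) mpoly" where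
  "Delta p \<beta> f =
     Poly_Mapping.single (Abs_poly_mapping p) 1
       * Poly_Mapping.mapp (\<lambda>v c. pair \<beta> (Poly_Mapping.lookup v) * c) f"

definition op_scale :: "'a::field \<Rightarrow> (('n,'a) mpoly \<Rightarrow> ('n,'a) mpoly) \<Rightarrow> ('n,'a) mpoly \<Rightarrow> ('n,'a) mpoly" where
  "op_scale c D = (\<lambda>f. Poly_Mapping.map (\<lambda>a. c * a) (D f))"

definition lie_bracket :: "(('n,'a::field) mpoly \<Rightarrow> ('n,'a) mpoly) \<Rightarrow> (('n,'a) mpoly \<Rightarrow> ('n,'a) mpoly) \<Rightarrow> ('n,'a) mpoly \<Rightarrow> ('n,'a) mpoly" where
  "lie_bracket D E = (\<lambda>f. D (E f) - E (D f))"

inductive_set lie_gen :: "(('n,'a::field) mpoly \<Rightarrow> ('n,'a) mpoly) set \<Rightarrow> (('n,'a) mpoly \<Rightarrow> ('n,'a) mpoly) set"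
  for S where
  gen: "D \<in> S \<Longrightarrow> D \<in> lie_gen S"
| zero: "(\<lambda>f. 0) \<in> lie_gen S"
| add: "D \<in> lie_gen S \<Longrightarrow> E \<in> lie_gen S \<Longrightarrow> (\<lambda>f. D f + E f) \<in> lie_gen S"
| scale: "D \<in> lie_gen S \<Longrightarrow> op_scale c D \<in> lie_gen S"
| bracket: "D \<in> lie_gen S \<Longrightarrow> E \<in> lie_gen S \<Longrightarrow> lie_bracket D E \<in> lie_gen S"

definition fin_dim_ops :: "(('n,'a::field) mpoly \<Rightarrow> ('n,'a) mpoly) set \<Rightarrow> bool" where
  "fin_dim_ops L \<longleftrightarrow> (\<exists>B. finite B \<and> (\<forall>D\<in>L. \<exists>c. D = (\<lambda>f. \<Sum>b\<in>B. op_scale (c b) b f)))"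

definition proportional :: "('n \<Rightarrow> 'a::field) \<Rightarrow> ('n \<Rightarrow> 'a) \<Rightarrow> bool" where
  "proportional \<beta> \<gamma> \<longleftrightarrow> (\<exists>c. \<beta> = (\<lambda>j. c * \<gamma> j)) \<or> (\<exists>c. \<gamma> = (\<lambda>j. c * \<beta> j))"

end

theory Submission
  imports Defs
begin

lemma lookup_single_mult_add:
  fixes g :: "('n \<Rightarrow>\<^sub>0 nat) \<Rightarrow>\<^sub>0 'a::field" and c :: 'a
  shows "Poly_Mapping.lookup (Poly_Mapping.single a c * g) (a + y) = c * Poly_Mapping.lookup g y"
  by (simp add: lookup_mult lookup_single when_mult)

lemma lookup_single_mult_not:
  fixes g :: "('n \<Rightarrow>\<^sub>0 nat) \<Rightarrow>\<^sub>0 'a::field" and c :: 'a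
  assumes "\<forall>y. k \<noteq> a + y"
  shows "Poly_Mapping.lookup (Poly_Mapping.single a c * g) k = 0"
  using assms by (simp add: lookup_mult lookup_single when_mult)

lemma lookup_mapp_mult:
  fixes f :: "('n \<Rightarrow>\<^sub>0 nat) \<Rightarrow>\<^sub>0 'a::field"
  shows "Poly_Mapping.lookup (Poly_Mapping.mapp (\<lambda>v c. h v * c) f) y = h y * Poly_Mapping.lookup f y"
  by (simp add: lookup_mapp when_def in_keys_iff)

lemma lookup_Abs_fin [simp]: "Poly_Mapping.lookup (Abs_poly_mapping (u::'n::finite \<Rightarrow> nat)) = u"
  by simp

lemma pair_add: "pair \<delta> (\<lambda>j. x j + y j) = pair \<delta> x + pair \<delta> y"
  by (simp add: pair_def sum.distrib distrib_left)

lemma pair_lin: "pair \<delta> (\<lambda>j. k * x j + y j) = of_nat k * pair \<delta> x + pair \<delta> y"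
  by (simp add: pair_def sum.distrib distrib_left sum_distrib_left mult_ac)

lemma pair_lin2: "pair \<delta> (\<lambda>j. x j + k * y j) = pair \<delta> x + of_nat k * pair \<delta> y"
  by (simp add: pair_def sum.distrib distrib_left sum_distrib_left mult_ac)

lemma pair_comb: "pair (\<lambda>j. a * \<gamma> j + b * \<beta> j) w = a * pair \<gamma> w + b * pair \<beta> w"
  by (simp add: pair_def sum.distrib distrib_left sum_distrib_left mult_ac algebra_simps)

lemma pair_scale: "pair (\<lambda>j. a * \<beta> j) w = a * pair \<beta> w"
  by (simp add: pair_def sum_distrib_left mult_ac)

lemma lookup_Delta_add:
  "Poly_Mapping.lookup (Delta u \<delta> f) (Abs_poly_mapping u + y) = pair \<delta> (Poly_Mapping.lookup y) * Poly_Mapping.lookup f y"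
  unfolding Delta_def by (simp add: lookup_single_mult_add lookup_mapp_mult)

lemma lookup_Delta_not:
  "\<forall>y. k \<noteq> Abs_poly_mapping u + y \<Longrightarrow> Poly_Mapping.lookup (Delta u \<delta> f) k = 0"
  unfolding Delta_def by (rule lookup_single_mult_not)

lemma lookup_plus_fun: "Poly_Mapping.lookup (Abs_poly_mapping (u::'n::finite \<Rightarrow> nat) + y) = (\<lambda>j. u j + Poly_Mapping.lookup y j)"
  by (simp add: lookup_add fun_eq_iff)

lemma Abs_plus: "Abs_poly_mapping (\<lambda>j. u j + w j) = Abs_poly_mapping u + Abs_poly_mapping (w::'n::finite \<Rightarrow> nat)"
  by (rule poly_mapping_eqI) (simp add: lookup_add)

lemma bracket_Delta:
  fixes \<delta> \<epsilon> :: "'n::finite \<Rightarrow> 'a::field"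
  shows "lie_bracket (Delta u \<delta>) (Delta w \<epsilon>) =
    Delta (\<lambda>j. u j + w j) (\<lambda>j. pair \<delta> w * \<epsilon> j - pair \<epsilon> u * \<delta> j)"
proof (rule ext, rule poly_mapping_eqI)
  fix f k
  let ?U = "Abs_poly_mapping u" and ?W = "Abs_poly_mapping w"
  show "Poly_Mapping.lookup (lie_bracket (Delta u \<delta>) (Delta w \<epsilon>) f) k =
    Poly_Mapping.lookup (Delta (\<lambda>j. u j + w j) (\<lambda>j. pair \<delta> w * \<epsilon> j - pair \<epsilon> u * \<delta> j) f) k"
  proof (cases "\<exists>y. k = ?U + ?W + y")
    case True
    then obtain y where k: "k = ?U + ?W + y" by blast
    have e1: "k = ?U + (?W + y)" "k = ?W + (?U + y)" using k by (simp_all add: ac_simps)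
    have L1: "Poly_Mapping.lookup (Delta u \<delta> (Delta w \<epsilon> f)) k
        = pair \<delta> (\<lambda>j. w j + Poly_Mapping.lookup y j) * (pair \<epsilon> (Poly_Mapping.lookup y) * Poly_Mapping.lookup f y)"
      unfolding e1(1) lookup_Delta_add lookup_plus_fun ..
    have L2: "Poly_Mapping.lookup (Delta w \<epsilon> (Delta u \<delta> f)) k
        = pair \<epsilon> (\<lambda>j. u j + Poly_Mapping.lookup y j) * (pair \<delta> (Poly_Mapping.lookup y) * Poly_Mapping.lookup f y)"
      unfolding e1(2) lookup_Delta_add lookup_plus_fun ..
    have R: "Poly_Mapping.lookup (Delta (\<lambda>j. u j + w j) (\<lambda>j. pair \<delta> w * \<epsilon> j - pair \<epsilon> u * \<delta> j) f) k
       = pair (\<lambda>j. pair \<delta> w * \<epsilon> j - pair \<epsilon> u * \<delta> j) (Poly_Mapping.lookup y) * Poly_Mapping.lookup f y"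
      unfolding k Abs_plus[symmetric] lookup_Delta_add ..
    have P: "pair (\<lambda>j. pair \<delta> w * \<epsilon> j - pair \<epsilon> u * \<delta> j) (Poly_Mapping.lookup y)
      = pair \<delta> w * pair \<epsilon> (Poly_Mapping.lookup y) - pair \<epsilon> u * pair \<delta> (Poly_Mapping.lookup y)"
      by (simp add: pair_def sum_subtractf sum_distrib_left algebra_simps)
    show ?thesis
      unfolding lie_bracket_def lookup_minus L1 L2 R P pair_add
      by (simp add: algebra_simps)
  next
    case False
    have Z: "Poly_Mapping.lookup (Delta (\<lambda>j. u j + w j) d f) k = 0" for d
      using False by (intro lookup_Delta_not) (simp add: Abs_plus)
    have A: "Poly_Mapping.lookup (Delta u \<delta> (Delta w \<epsilon> f)) k = 0"
    proof (cases "\<exists>z. k = ?U + z")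
      case True
      then obtain z where z: "k = ?U + z" by blast
      have "\<forall>y. z \<noteq> ?W + y" using False z by (auto simp: ac_simps)
      then show ?thesis unfolding z lookup_Delta_add by (simp add: lookup_Delta_not)
    next
      case False
      then show ?thesis by (intro lookup_Delta_not) auto
    qed
    have B: "Poly_Mapping.lookup (Delta w \<epsilon> (Delta u \<delta> f)) k = 0"
    proof (cases "\<exists>z. k = ?W + z")
      case True
      then obtain z where z: "k = ?W + z" by blast
      have "\<forall>y. z \<noteq> ?U + y" using False z by (auto simp: ac_simps)
      then show ?thesis unfolding z lookup_Delta_add by (simp add: lookup_Delta_not)
    next
      case False
      then show ?thesis by (intro lookup_Delta_not) auto
    qed
    show ?thesis unfolding lie_bracket_def lookup_minus A B Z by simp
  qed
qed

primrec ab :: "(nat \<Rightarrow> 'a::field) \<Rightarrow> 'a \<Rightarrow> 'a \<Rightarrow> nat \<Rightarrow> 'a \<times> 'a" where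
  "ab lam g t 0 = (1, 0)"
| "ab lam g t (Suc k) = (lam k * fst (ab lam g t k),
     lam k * snd (ab lam g t k) - (fst (ab lam g t k) * g + snd (ab lam g t k) * t))"

primrec cc :: "(nat \<Rightarrow> 'a::field) \<Rightarrow> nat \<Rightarrow> 'a" where
  "cc x 0 = 1"
| "cc x (Suc m) = x m * cc x m"

lemma pair_single: "pair \<beta> (Poly_Mapping.lookup (Poly_Mapping.single j0 (1::nat))) = \<beta> j0"
proof -
  have "pair \<beta> (Poly_Mapping.lookup (Poly_Mapping.single j0 (1::nat))) = (\<Sum>j\<in>UNIV. if j = j0 then \<beta> j else 0)"
    unfolding pair_def by (intro sum.cong) (auto simp: lookup_single when_def)
  then show ?thesis by simp
qed

lemma lookup_span:
  fixes B :: "(('n,'a::field) mpoly \<Rightarrow> ('n,'a) mpoly) set"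
  assumes "D = (\<lambda>f. \<Sum>b\<in>B. op_scale (c b) b f)" and "Poly_Mapping.lookup (D f0) k \<noteq> 0"
  shows "k \<in> (\<Union>b\<in>B. Poly_Mapping.keys (b f0))"
proof (rule ccontr)
  assume "k \<notin> (\<Union>b\<in>B. Poly_Mapping.keys (b f0))"
  then have "\<And>b. b \<in> B \<Longrightarrow> Poly_Mapping.lookup (b f0) k = 0" by (auto simp: in_keys_iff)
  then have "Poly_Mapping.lookup (D f0) k = 0"
    unfolding assms(1) op_scale_def by (simp add: lookup_sum map.rep_eq)
  with assms(2) show False by simp
qed

theorem lemma6:
  fixes p q :: "'n::finite \<Rightarrow> nat" and \<beta> \<gamma> :: "'n \<Rightarrow> 'a::field_char_0" and r s :: nat
  assumes "p \<noteq> (\<lambda>_. 0)" and "q \<noteq> (\<lambda>_. 0)"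
    and "\<not> proportional \<beta> \<gamma>"
    and "fin_dim_ops (lie_gen {Delta p \<beta>, Delta q \<gamma>})"
    and "pair \<beta> (\<lambda>j. r * p j + q j) = 0" and "\<forall>r'<r. pair \<beta> (\<lambda>j. r' * p j + q j) \<noteq> 0"
    and "pair \<gamma> (\<lambda>j. p j + s * q j) = 0" and "\<forall>s'<s. pair \<gamma> (\<lambda>j. p j + s' * q j) \<noteq> 0"
  shows "r = 0 \<or> s = 0"
proof (rule ccontr)
  assume nz: "\<not> (r = 0 \<or> s = 0)"
  hence r0: "r > 0" and s0: "s > 0" by auto
  define L where "L = lie_gen {Delta p \<beta>, Delta q \<gamma>}"
  define t where "t = pair \<beta> p"
  define g where "g = pair \<gamma> p"
  define e where "e = pair \<gamma> q"
  define h where "h = pair \<beta> q"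
  define lam where "lam = (\<lambda>k::nat. pair \<beta> (\<lambda>j. k * p j + q j))"
  define a where "a = (\<lambda>k. fst (ab lam g t k))"
  define b where "b = (\<lambda>k. snd (ab lam g t k))"
  define dl where "dl = (\<lambda>k j. a k * \<gamma> j + b k * \<beta> j)"
  define A where "A = (\<lambda>k. Delta (\<lambda>j. k * p j + q j) (dl k))"
  have lam_eq: "lam k = of_nat k * t + h" for k
    unfolding lam_def t_def h_def by (rule pair_lin)
  have a0: "a 0 = 1" "b 0 = 0" unfolding a_def b_def by simp_all
  have aS: "a (Suc k) = lam k * a k" "b (Suc k) = lam k * b k - (a k * g + b k * t)" for k
    unfolding a_def b_def by simp_all
  have AL: "A k \<in> L" for k
  proof (induction k)
    case 0
    have "A 0 = Delta q \<gamma>" unfolding A_def dl_def a0 by simp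
    then show ?case unfolding L_def by (auto intro: lie_gen.gen)
  next
    case (Suc k)
    have "lie_bracket (Delta p \<beta>) (A k) = A (Suc k)"
      unfolding A_def bracket_Delta
    proof (intro arg_cong2[where f=Delta] ext)
      fix j
      show "p j + (k * p j + q j) = Suc k * p j + q j" by simp
      have "pair (dl k) p = a k * g + b k * t" unfolding dl_def g_def t_def by (rule pair_comb)
      moreover have "pair \<beta> (\<lambda>j. k * p j + q j) = lam k" unfolding lam_def ..
      ultimately show "pair \<beta> (\<lambda>j. k * p j + q j) * dl k j - pair (dl k) p * \<beta> j = dl (Suc k) j"
        by (simp add: dl_def aS algebra_simps)
    qed
    moreover have "Delta p \<beta> \<in> L" unfolding L_def by (auto intro: lie_gen.gen)
    ultimately show ?case using Suc by (metis lie_gen.bracket L_def)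
  qed
  have hr: "of_nat r * t + h = 0" using assms(5) unfolding t_def h_def pair_lin .
  have hs: "g + of_nat s * e = 0" using assms(7) unfolding g_def e_def pair_lin2 .
  have g0: "g \<noteq> 0" using assms(8) s0 unfolding g_def by auto
  have s0': "(of_nat s :: 'a) \<noteq> 0" using s0 by simp
  have e_eq: "e = - g / of_nat s" using hs s0' by (simp add: field_simps add_eq_0_iff)
  have ar0: "k \<le> r \<Longrightarrow> a k \<noteq> 0" for k
  proof (induction k)
    case 0 then show ?case using a0 by simp
  next
    case (Suc k)
    have "lam k \<noteq> 0" using assms(6) Suc.prems unfolding lam_def by auto
    then show ?case using Suc by (simp add: aS)
  qed
  define pi where "pi = (\<lambda>k. a k * g + b k * t)"
  have piS: "pi (Suc k) = (lam k - t) * pi k" for k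
    unfolding pi_def aS by (simp add: algebra_simps)
  have hh: "h = - of_nat r * t" using hr by (simp add: add_eq_0_iff)
  have inv: "(of_nat r + 1 - of_nat k) * pi k = (of_nat r + 1) * g * a k" for k
  proof (induction k)
    case 0 then show ?case unfolding pi_def a0 by simp
  next
    case (Suc k)
    have "(of_nat r + 1) * g * a (Suc k) = lam k * ((of_nat r + 1) * g * a k)"
      unfolding aS by (simp add: algebra_simps)
    also have "\<dots> = lam k * ((of_nat r + 1 - of_nat k) * pi k)" using Suc by simp
    also have "\<dots> = (of_nat r + 1 - of_nat (Suc k)) * pi (Suc k)"
      unfolding piS lam_eq hh by (simp add: algebra_simps)
    finally show ?case by simp
  qed
  have pir: "pi r = (of_nat r + 1) * g * a r" using inv[of r] by simp
  define u where "u = (\<lambda>j. r * p j + q j)"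
  have bu: "pair \<beta> u = 0" using assms(5) unfolding u_def .
  define x where "x = (\<lambda>m::nat. pair (dl r) (\<lambda>j. p j + m * u j))"
  have x_eq: "x m = pi r + of_nat m * (a r * (of_nat r * g + e))" for m
  proof -
    have "pair (dl r) u = a r * (of_nat r * g + e)"
      using hr unfolding dl_def pair_comb u_def pair_lin g_def e_def t_def h_def by simp
    moreover have "pair (dl r) p = pi r"
      unfolding dl_def pair_comb pi_def g_def t_def by simp
    ultimately show ?thesis unfolding x_def pair_lin2 by simp
  qed
  have x0: "x m \<noteq> 0" for m
  proof
    assume xm: "x m = 0"
    have rs: "1 \<le> r * s" using r0 s0 by simp
    then obtain k where k: "r * s = k + 1" by (metis le_add_diff_inverse2)
    define N where "N = (r + 1) * s + m * k"
    have N0: "N > 0" unfolding N_def using s0 by simp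
    have "(of_nat r * of_nat s :: 'a) = of_nat k + 1" using arg_cong[OF k, of "of_nat :: nat \<Rightarrow> 'a"] by simp
    then have ofN: "(of_nat N :: 'a) = (of_nat r + 1) * of_nat s + of_nat m * (of_nat r * of_nat s - 1)"
      unfolding N_def by (simp add: algebra_simps)
    have "of_nat s * x m = a r * g * of_nat N"
      unfolding ofN x_eq pir e_eq using s0' by (simp add: field_simps)
    with xm have "a r * g * of_nat N = 0" by simp
    then show False using ar0[of r] g0 N0 by simp
  qed
  define c where "c = cc x"
  have c0: "c m \<noteq> 0" for m
    unfolding c_def by (induction m) (simp_all add: x0)
  define E where "E = (\<lambda>m. Delta (\<lambda>j. p j + m * u j) (\<lambda>j. c m * \<beta> j))"
  have EL: "E m \<in> L" for m
  proof (induction m)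
    case 0
    have "E 0 = Delta p \<beta>" unfolding E_def c_def by simp
    then show ?case unfolding L_def by (auto intro: lie_gen.gen)
  next
    case (Suc m)
    have "lie_bracket (A r) (E m) = E (Suc m)"
      unfolding A_def E_def bracket_Delta u_def[symmetric]
    proof (intro arg_cong2[where f=Delta] ext)
      fix j
      show "u j + (p j + m * u j) = p j + Suc m * u j" by simp
      have "pair (\<lambda>j. c m * \<beta> j) u = 0" unfolding pair_scale bu by simp
      then show "pair (dl r) (\<lambda>j. p j + m * u j) * (c m * \<beta> j) - pair (\<lambda>j. c m * \<beta> j) u * dl r j
          = c (Suc m) * \<beta> j"
        unfolding c_def x_def by simp
    qed
    then show ?case using Suc AL[of r] unfolding L_def by (metis lie_gen.bracket)
  qed
  obtain j0 where bj0: "\<beta> j0 \<noteq> 0"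
  proof -
    have "\<beta> \<noteq> (\<lambda>j. 0 * \<gamma> j)" using assms(3) unfolding proportional_def by blast
    then show ?thesis using that by auto
  qed
  obtain i0 where qi0: "q i0 \<noteq> 0" using assms(2) by auto
  obtain B where finB: "finite B" and spanB: "\<forall>D\<in>L. \<exists>c. D = (\<lambda>f. \<Sum>b\<in>B. op_scale (c b) b f)"
    using assms(4) unfolding fin_dim_ops_def L_def by blast
  define f0 :: "('n,'a) mpoly" where "f0 = Poly_Mapping.single (Poly_Mapping.single j0 1) 1"
  define K where "K = (\<Union>b\<in>B. Poly_Mapping.keys (b f0))"
  have finK: "finite K" unfolding K_def using finB by simp
  define key where "key = (\<lambda>m. Abs_poly_mapping (\<lambda>j. p j + m * u j) + Poly_Mapping.single j0 (1::nat))"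
  have keyK: "key m \<in> K" for m
  proof -
    have "Poly_Mapping.lookup (E m f0) (key m) = c m * \<beta> j0"
      unfolding E_def key_def lookup_Delta_add pair_scale pair_single f0_def by simp
    then have "Poly_Mapping.lookup (E m f0) (key m) \<noteq> 0" using c0 bj0 by simp
    moreover obtain cf where "E m = (\<lambda>f. \<Sum>b\<in>B. op_scale (cf b) b f)" using spanB EL[of m] by blast
    ultimately show ?thesis unfolding K_def by (intro lookup_span) 
  qed
  have "inj key"
  proof (rule injI)
    fix m1 m2 assume "key m1 = key m2"
    then have "Poly_Mapping.lookup (key m1) i0 = Poly_Mapping.lookup (key m2) i0" by simp
    then have "m1 * u i0 = m2 * u i0" unfolding key_def by (simp add: lookup_add)
    moreover have "u i0 \<noteq> 0" unfolding u_def using qi0 by simp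
    ultimately show "m1 = m2" by simp
  qed
  then have "infinite (range key)" using finite_imageD by blast
  moreover have "range key \<subseteq> K" using keyK by auto
  ultimately show False using finK finite_subset by blast
qed
end
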